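(* Let $k\ge 2$, let $\sim$ be an equivalence relation on $\{1,\dots,N\}^2$ satisfying condition (C2) with constant $B$, and assume $N\ge B$. Let $\pi$ be a partition of $\{1,\dots,k\}$ with $r$ blocks. Then $$\#\mathcal E^{(N)}_k(\pi)\le N^{r+1}\,B^{\,k-r-1}.$$
   Context: For $N\in\mathbb N$, let $\sim$ be an equivalence relation on $\{1,\dots,N\}^2$. Condition (C2): $\max_{p,q,r}\#\{s\in\{1,\dots,N\}:(p,q)\sim(r,s)\}\le B<\infty$, where $B$ does not depend on $N$. For a partition $\pi$ of $\{1,\dots,k\}$, let $\mathcal E^{(N)}_k(\pi)$ be the set of index sequences $i=(i_1,\dots,i_k)\in\{1,\dots,N\}^k$ such that, with $i_{k+1}:=i_1$, for all $l,m\in\{1,\dots,k\}$: $l$ and $m$ lie in the same block of $\pi$ if and only if $(i_l,i_{l+1})\sim(i_m,i_{m+1})$. (Every index sequence belongs to $\mathcal E^{(N)}_k(\pi)$ for exactly one partition $\pi$.) *)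

theory Defs
  imports "HOL-Analysis.Analysis" "HOL-Library.Disjoint_Sets" "HOL-Library.FuncSet"
begin

text \<open>Cyclic successor on {1..k}: l+1 for l<k, and 1 for l=k (so i_{k+1} := i_1).\<close>
definition cyc_succ :: "nat \<Rightarrow> nat \<Rightarrow> nat" where
  "cyc_succ k l = (if l = k then 1 else l + 1)"

definition cond_C2 :: "nat \<Rightarrow> ((nat \<times> nat) \<times> (nat \<times> nat)) set \<Rightarrow> real \<Rightarrow> bool" where
  "cond_C2 N R B \<longleftrightarrow>
     (\<forall>p\<in>{1..N}. \<forall>q\<in>{1..N}. \<forall>r\<in>{1..N}.
        real (card {s\<in>{1..N}. ((p,q),(r,s)) \<in> R}) \<le> B)"

definition E_set :: "nat \<Rightarrow> ((nat \<times> nat) \<times> (nat \<times> nat)) set \<Rightarrow> nat \<Rightarrow> nat set set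
                      \<Rightarrow> (nat \<Rightarrow> nat) set" where
  "E_set N R k P = {i \<in> {1..k} \<rightarrow>\<^sub>E {1..N}.
     \<forall>l\<in>{1..k}. \<forall>m\<in>{1..k}.
       ((\<exists>b\<in>P. l \<in> b \<and> m \<in> b) \<longleftrightarrow>
        ((i l, i (cyc_succ k l)), (i m, i (cyc_succ k m))) \<in> R)}"

end

theory Submission
  imports Defs
begin

theorem mainTheorem4:
  fixes N k :: nat and B :: real
    and R :: "((nat \<times> nat) \<times> (nat \<times> nat)) set"
    and P :: "nat set set"
  assumes "k \<ge> 2"
    and "equiv ({1..N} \<times> {1..N}) R"
    and "cond_C2 N R B"
    and "real N \<ge> B"
    and "partition_on {1..k} P"
  shows "real (card (E_set N R k P))
           \<le> real N ^ (card P + 1) * B powi (int k - int (card P) - 1)"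
proof (cases "N = 0")
  case True
  have "E_set N R k P = {}"
    using assms(1) True by (auto simp: E_set_def PiE_iff)
  then show ?thesis using True by simp
next
  case False
  note eq = assms(2)
  have refl: "((p,q),(p,q)) \<in> R" if "p \<in> {1..N}" "q \<in> {1..N}" for p q
    using eq that by (intro refl_onD[of "{1..N} \<times> {1..N}"]) (auto simp: equiv_def)
  have B1: "B \<ge> 1"
  proof -
    have "1 \<in> {s\<in>{1..N}. ((1,1),(1,s)) \<in> R}" using False refl by auto
    hence "card {s\<in>{1..N}. ((1,1),(1,s)) \<in> R} > 0"
      by (subst card_gt_0_iff) auto
    hence "card {s\<in>{1..N}. ((1,1),(1,s)) \<in> R} \<ge> 1" by linarith
    moreover have "real (card {s\<in>{1..N}. ((1,1),(1,s)) \<in> R}) \<le> B"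
      using assms(3) False unfolding cond_C2_def by auto
    ultimately show ?thesis by linarith
  qed
  define E where "E = E_set N R k P"
  define S where "S j = (\<lambda>i. restrict i {1..j}) ` E" for j
  define c where "c l = (if l \<in> Min ` P then real N else B)" for l
  have finP: "finite P" using assms(5) finite_elements by blast
  have Esub: "E \<subseteq> {1..k} \<rightarrow>\<^sub>E {1..N}" unfolding E_def E_set_def by auto
  have Ssub: "S j \<subseteq> {1..j} \<rightarrow>\<^sub>E {1..N}" if "j \<le> k" for j
    using Esub that unfolding S_def by (auto simp: PiE_iff)
  have finS: "finite (S j)" if "j \<le> k" for j
    using Ssub[OF that] by (rule finite_subset) (simp add: finite_PiE)
  have stepS: "real (card (S (Suc j))) \<le> real (card (S j)) * c j" if j: "1 \<le> j" "j < k" for j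
  proof -
    define V where "V g = {s\<in>{1..N}. \<forall>m\<in>{1..<j}. (\<exists>b\<in>P. m\<in>b \<and> j\<in>b) \<longrightarrow> ((g m, g (Suc m)),(g j, s))\<in>R}" for g
    have inj: "inj_on (\<lambda>f. (restrict f {1..j}, f (Suc j))) (S (Suc j))"
    proof (rule inj_onI)
      fix f f' assume f: "f \<in> S (Suc j)" "f' \<in> S (Suc j)"
        and e: "(restrict f {1..j}, f (Suc j)) = (restrict f' {1..j}, f' (Suc j))"
      have ext: "f \<in> extensional {1..Suc j}" "f' \<in> extensional {1..Suc j}"
        using f Ssub[of "Suc j"] j by (auto simp: PiE_def)
      show "f = f'"
      proof (rule extensionalityI[OF ext])
        fix x assume "x \<in> {1..Suc j}"
        then consider "x \<in> {1..j}" | "x = Suc j" by fastforce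
        then show "f x = f' x" using e by cases (metis Pair_inject restrict_apply', auto)
      qed
    qed
    have img: "(\<lambda>f. (restrict f {1..j}, f (Suc j))) ` S (Suc j) \<subseteq> Sigma (S j) V"
    proof
      fix x assume "x \<in> (\<lambda>f. (restrict f {1..j}, f (Suc j))) ` S (Suc j)"
      then obtain i where iE: "i \<in> E" and x: "x = (restrict (restrict i {1..Suc j}) {1..j}, restrict i {1..Suc j} (Suc j))"
        unfolding S_def by auto
      have rr: "restrict (restrict i {1..Suc j}) {1..j} = restrict i {1..j}"
        by (auto simp: restrict_def fun_eq_iff)
      have iP: "i \<in> {1..k} \<rightarrow>\<^sub>E {1..N}" using iE Esub by auto
      have cond: "\<forall>l\<in>{1..k}. \<forall>m\<in>{1..k}.
       ((\<exists>b\<in>P. l \<in> b \<and> m \<in> b) \<longleftrightarrow>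
        ((i l, i (cyc_succ k l)), (i m, i (cyc_succ k m))) \<in> R)"
        using iE unfolding E_def E_set_def by auto
      show "x \<in> Sigma (S j) V"
        unfolding x rr
      proof (rule SigmaI)
        show "restrict i {1..j} \<in> S j" using iE unfolding S_def by auto
        show "restrict i {1..Suc j} (Suc j) \<in> V (restrict i {1..j})"
          unfolding V_def
        proof (intro CollectI conjI ballI impI)
          show "restrict i {1..Suc j} (Suc j) \<in> {1..N}" using iP j by auto
        next
          fix m assume m: "m \<in> {1..<j}" and b: "\<exists>b\<in>P. m \<in> b \<and> j \<in> b"
          have "((i m, i (cyc_succ k m)), (i j, i (cyc_succ k j))) \<in> R"
            using cond m b j by auto
          moreover have "cyc_succ k m = Suc m" "cyc_succ k j = Suc j"
            using m j by (auto simp: cyc_succ_def)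
          ultimately show "((restrict i {1..j} m, restrict i {1..j} (Suc m)),
                 (restrict i {1..j} j, restrict i {1..Suc j} (Suc j))) \<in> R"
            using m j by auto
        qed
      qed
    qed
    have finV: "finite (V g)" for g unfolding V_def by auto
    have Vle: "real (card (V g)) \<le> c j" if g: "g \<in> S j" for g
    proof (cases "j \<in> Min ` P")
      case True
      have "card (V g) \<le> card {1..N}" unfolding V_def by (rule card_mono) auto
      then show ?thesis using True by (simp add: c_def)
    next
      case nm: False
      have UP: "\<Union>P = {1..k}" using partition_onD1[OF assms(5)] by simp
      have "j \<in> \<Union>P" unfolding UP using j by simp
      then obtain b where b: "b \<in> P" "j \<in> b" by blast
      have bs: "b \<subseteq> {1..k}" using b UP by blast
      hence finb: "finite b" using finite_subset by blast
      define m where "m = Min b"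
      have "m \<in> b" unfolding m_def using finb b by (intro Min_in) auto
      moreover have "m \<le> j" unfolding m_def using finb b by simp
      moreover have "m \<noteq> j" using nm b unfolding m_def by blast
      ultimately have m: "m \<in> {1..<j}" "m \<in> b" using bs by auto
      have gP: "g \<in> {1..j} \<rightarrow>\<^sub>E {1..N}" using subsetD[OF Ssub[of j] g] j by simp
      have "V g \<subseteq> {s\<in>{1..N}. ((g m, g (Suc m)),(g j, s))\<in>R}"
        unfolding V_def using m b by auto
      hence "card (V g) \<le> card {s\<in>{1..N}. ((g m, g (Suc m)),(g j, s))\<in>R}"
        by (intro card_mono) auto
      moreover have "g m \<in> {1..N}" "g (Suc m) \<in> {1..N}" "g j \<in> {1..N}"
        using m j gP[unfolded PiE_iff] by auto
      hence "real (card {s\<in>{1..N}. ((g m, g (Suc m)),(g j, s))\<in>R}) \<le> B"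
        using assms(3) unfolding cond_C2_def by blast
      ultimately show ?thesis using nm unfolding c_def by simp
    qed
    have "card (S (Suc j)) \<le> card (Sigma (S j) V)"
      by (rule card_inj_on_le[OF inj img]) (use finS j finV in auto)
    also have "card (Sigma (S j) V) = (\<Sum>g\<in>S j. card (V g))"
      using finS j finV by (simp add: card_SigmaI)
    finally have "real (card (S (Suc j))) \<le> (\<Sum>g\<in>S j. real (card (V g)))"
      by (metis of_nat_le_iff of_nat_sum)
    also have "\<dots> \<le> (\<Sum>g\<in>S j. c j)" by (rule sum_mono) (rule Vle)
    finally show ?thesis by simp
  qed
  have bound: "real (card (S j)) \<le> real N * (\<Prod>l\<in>{1..<j}. c l)" if "1 \<le> j" "j \<le> k" for j
    using that
  proof (induction j rule: dec_induct)
    case base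
    have "card (S 1) \<le> card ({1..1::nat} \<rightarrow>\<^sub>E {1..N})"
      by (rule card_mono) (simp add: finite_PiE, rule Ssub, use assms(1) in simp)
    then show ?case by (simp add: card_PiE)
  next
    case (step n)
    have c0: "c n \<ge> 0" using B1 by (simp add: c_def)
    have "real (card (S (Suc n))) \<le> real (card (S n)) * c n" using step by (intro stepS) auto
    also have "\<dots> \<le> real N * (\<Prod>l\<in>{1..<n}. c l) * c n"
      using step c0 by (intro mult_right_mono) auto
    also have "\<dots> = real N * (\<Prod>l\<in>{1..<Suc n}. c l)"
      using step by (simp add: prod.atLeastLessThan_Suc)
    finally show ?case .
  qed
  have SE: "S k = E"
  proof -
    have "restrict i {1..k} = i" if "i \<in> E" for i
      using that Esub by (auto simp: PiE_def intro: extensional_restrict)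
    thus ?thesis unfolding S_def by force
  qed
  have main: "real (card E) \<le> real N * (\<Prod>l\<in>{1..<k}. c l)"
    using bound[of k] SE assms(1) by auto
  define M where "M = {1..<k} \<inter> Min ` P"
  have prodc: "(\<Prod>l\<in>{1..<k}. c l) = real N ^ card M * B ^ card ({1..<k} - M)"
  proof -
    have "(\<Prod>l\<in>{1..<k}. c l) = (\<Prod>l\<in>{1..<k} \<inter> {l. l \<in> Min ` P}. real N) * (\<Prod>l\<in>{1..<k} \<inter> - {l. l \<in> Min ` P}. B)"
      unfolding c_def by (rule prod.If_cases) simp
    moreover have "{1..<k} \<inter> {l. l \<in> Min ` P} = M" "{1..<k} \<inter> - {l. l \<in> Min ` P} = {1..<k} - M"
      unfolding M_def by auto
    ultimately show ?thesis by simp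
  qed
  define m where "m = card M"
  have mr: "m \<le> card P"
  proof -
    have "m \<le> card (Min ` P)" unfolding m_def M_def
      by (rule card_mono) (use finP in auto)
    also have "\<dots> \<le> card P" by (rule card_image_le[OF finP])
    finally show ?thesis .
  qed
  have mk: "card ({1..<k} - M) = k - 1 - m"
    unfolding m_def by (subst card_Diff_subset) (auto simp: M_def)
  have mk2: "m \<le> k - 1" unfolding m_def M_def
    using card_mono[of "{1..<k}" "{1..<k} \<inter> Min ` P"] by auto
  define r where "r = card P"
  have Bpos: "B > 0" using B1 by simp
  have "real N * (real N ^ m * B ^ (k - 1 - m)) = real N ^ (m+1) * B powi (int (r - m)) * B powi (int k - int r - 1)"
  proof -
    have "B ^ (k - 1 - m) = B powi (int (k - 1 - m))" by (simp add: power_int_of_nat)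
    also have "int (k - 1 - m) = int (r - m) + (int k - int r - 1)"
      using mr mk2 assms(1) unfolding r_def by linarith
    also have "B powi \<dots> = B powi (int (r - m)) * B powi (int k - int r - 1)"
      using Bpos by (simp add: power_int_add)
    finally show ?thesis by simp
  qed
  also have "\<dots> \<le> real N ^ (m+1) * real N ^ (r - m) * B powi (int k - int r - 1)"
  proof -
    have "B powi (int (r - m)) = B ^ (r - m)" by (simp add: power_int_of_nat)
    also have "\<dots> \<le> real N ^ (r - m)" using B1 assms(4) by (intro power_mono) auto
    finally show ?thesis using Bpos
      by (intro mult_right_mono mult_left_mono) auto
  qed
  also have "\<dots> = real N ^ (r + 1) * B powi (int k - int r - 1)"
    using mr unfolding r_def by (simp add: power_add[symmetric])
  finally show ?thesis using main prodc mk unfolding E_def r_def m_def by simp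
qed
end
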